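(* Consider the continuous Bomber Problem described in the context, with parameter $v\in(0,1]$, and let $u=1-v\in[0,1)$. For $u\in(0,1)$ and $t>0$ define $$f_u(t)=\log\left[1+\frac{u}{e^{tu}-1}\right],$$ and for $u=0$ define $f_0(t)=\lim_{u\to 0}f_u(t)=\log(1+t^{-1})$. For $u\in[0,1)$ and $t>0$ define $g_u(t)=\log(1+t^{-1}-u)$. Let $t>0$. If one of the following holds: (i) $u=0$; (ii) $u\in(0,1/2)$ and $t\ge u^{-1}\log(2v)$; (iii) $u\in[1/2,1)$, then for $x>0$: $K(x,t)=x$ if and only if $x\le f_u(t)$. In the remaining case, where $u\in(0,1/2)$ and $t<u^{-1}\log(2v)$, we have: $K(x,t)=x$ if $x\le g_u(t)$, and $K(x,t)<x$ if $x>f_u(t)$.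
   Context: The Bomber Problem: a bomber holding an amount $x\ge 0$ of (continuously divisible) ammunition must survive for a remaining time $t\ge 0$ ("time" means time remaining). Enemies arrive according to a time-homogeneous Poisson process of rate 1. Upon meeting an enemy, the bomber chooses an amount $y\in[0,x]$ of its current ammunition to fire; the enemy survives this with probability $e^{-y}$, and if it survives it destroys the bomber with probability $v\in(0,1]$ (fixed, known). Thus the bomber survives an encounter in which it spends $y$ with probability $a(y)=1-ve^{-y}$, and continues with ammunition $x-y$. $P(x,t)$ denotes the optimal (maximal over strategies) probability that the bomber survives for time $t$ starting with ammunition $x$; $H(x,t)$ denotes the optimal conditional probability of survival given that an enemy is encountered at time (remaining) $t$ while holding ammunition $x$; and $K(x,t)\in[0,x]$ denotes the optimal amount of ammunition to fire at that enemy, so that $H(x,t)=a(K(x,t))P(x-K(x,t),t)$. *)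

theory Defs
  imports "HOL-Analysis.Analysis"
begin

text \<open>Continuous Bomber Problem, enemy arrivals Poisson of rate 1, kill parameter v.
  Survival probability of an encounter in which amount y is fired.\<close>
definition bomb_a :: "real \<Rightarrow> real \<Rightarrow> real" where
  "bomb_a v y = 1 - v * exp (- y)"

text \<open>bomb_V v n x t: optimal probability of surviving for remaining time t, starting with
  ammunition x, on the event that at most n enemies are met (dynamic programming on the
  time s elapsed until the first enemy arrives, which has density exp(-s)).\<close>
primrec bomb_V :: "real \<Rightarrow> nat \<Rightarrow> real \<Rightarrow> real \<Rightarrow> real" where
  "bomb_V v 0 x t = exp (- t)"
| "bomb_V v (Suc n) x t = exp (- t) +
     integral {0..t} (\<lambda>s. exp (- s) *
        (SUP y\<in>{0..x}. bomb_a v y * bomb_V v n (x - y) (t - s)))"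

text \<open>Optimal survival probability P(x,t) (limit of the increasing sequence bomb_V).\<close>
definition bomb_P :: "real \<Rightarrow> real \<Rightarrow> real \<Rightarrow> real" where
  "bomb_P v x t = (SUP n. bomb_V v n x t)"

definition bomb_H :: "real \<Rightarrow> real \<Rightarrow> real \<Rightarrow> real" where
  "bomb_H v x t = (SUP y\<in>{0..x}. bomb_a v y * bomb_P v (x - y) t)"

definition bomb_K :: "real \<Rightarrow> real \<Rightarrow> real \<Rightarrow> real set" where
  "bomb_K v x t = {y \<in> {0..x}. bomb_a v y * bomb_P v (x - y) t = bomb_H v x t}"

definition bomb_f :: "real \<Rightarrow> real \<Rightarrow> real" where
  "bomb_f u t = (if u = 0 then ln (1 + 1 / t) else ln (1 + u / (exp (t * u) - 1)))"

definition bomb_g :: "real \<Rightarrow> real \<Rightarrow> real" where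
  "bomb_g u t = ln (1 + 1 / t - u)"

end

theory Submission
  imports Defs
begin


definition bG :: "real \<Rightarrow> nat \<Rightarrow> real \<Rightarrow> real \<Rightarrow> real" where
  "bG v n z r = (SUP y\<in>{0..z}. bomb_a v y * bomb_V v n (z - y) r)"

lemma bomb_V_Suc': "bomb_V v (Suc n) x t = exp (- t) + integral {0..t} (\<lambda>s. exp (- s) * bG v n x (t - s))"
  by (simp add: bG_def)

lemma int_lemma:
  fixes g :: "real \<Rightarrow> real"
  assumes mono: "\<And>r1 r2. 0 \<le> r1 \<Longrightarrow> r1 \<le> r2 \<Longrightarrow> r2 \<le> t \<Longrightarrow> g r2 \<le> g r1"
    and nn: "\<And>r. 0 \<le> r \<Longrightarrow> r \<le> t \<Longrightarrow> 0 \<le> g r"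
  shows "(\<lambda>s. exp (- s) * g (t - s)) integrable_on {0..t}"
proof -
  have m: "mono_on {0..t} (\<lambda>s. g (t - s))"
    by (rule mono_onI) (auto intro!: mono)
  have i: "(\<lambda>s. g (t - s)) integrable_on {0..t}"
    using integrable_on_mono_on[OF m] .
  have ai: "(\<lambda>s. g (t - s)) absolutely_integrable_on {0..t}"
    using i nn by (intro nonnegative_absolutely_integrable_1) auto
  have "(\<lambda>s. exp (- s) * g (t - s)) absolutely_integrable_on {0..t}"
  proof (rule absolutely_integrable_bounded_measurable_product_real[OF _ _ _ ai])
    show "(\<lambda>s. exp (- s)) \<in> borel_measurable (lebesgue_on {0..t})"
      by (intro continuous_imp_measurable_on_sets_lebesgue continuous_intros) auto
    show "{0..t} \<in> sets lebesgue" by simp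
    show "bounded ((\<lambda>s. exp (- s::real)) ` {0..t})"
      by (intro compact_imp_bounded compact_continuous_image continuous_intros) auto
  qed
  then show ?thesis using set_lebesgue_integral_eq_integral(1) by blast
qed

lemma exp_int:
  fixes a b :: real
  assumes "a \<le> b"
  shows "((\<lambda>s. exp (- s)) has_integral (exp (- a) - exp (- b))) {a..b}"
proof -
  have "\<And>x. ((\<lambda>s. - exp (- s)) has_real_derivative exp (- x)) (at x within {a..b})"
    by (auto intro!: derivative_eq_intros)
  then have "((\<lambda>s. exp (- s)) has_integral ((- exp (- b)) - (- exp (- a)))) {a..b}"
    using assms by (intro fundamental_theorem_of_calculus) (auto simp: has_real_derivative_iff_has_vector_derivative)
  then show ?thesis by simp
qed

lemma exp_integrable: "(\<lambda>s. exp (- s::real)) integrable_on {a..b}"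
  by (intro integrable_continuous_interval continuous_intros)

locale bomber =
  fixes v :: real
  assumes v0: "0 < v" and v1: "v \<le> 1"
begin

lemma a_nn: "0 \<le> y \<Longrightarrow> 0 \<le> bomb_a v y"
proof -
  assume "0 \<le> y"
  then have "exp (- y) \<le> 1" by simp
  then have "v * exp (- y) \<le> 1" using v0 v1 by (metis mult_le_one exp_ge_zero less_eq_real_def)
  then show ?thesis by (simp add: bomb_a_def)
qed

lemma a_le1: "bomb_a v y \<le> 1"
  using v0 by (simp add: bomb_a_def)

lemma a_mono: "y \<le> y' \<Longrightarrow> bomb_a v y \<le> bomb_a v y'"
  using v0 by (simp add: bomb_a_def)

lemma a_zero: "bomb_a v 0 = 1 - v"
  by (simp add: bomb_a_def)

lemma a_lip:
  assumes "0 \<le> y'" "y' \<le> y"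
  shows "bomb_a v y \<le> bomb_a v y' + (y - y')"
proof -
  have "exp (- y') - exp (- y) = exp (- y') * (1 - exp (- (y - y')))"
    by (simp add: algebra_simps flip: exp_add)
  also have "\<dots> \<le> 1 * (1 - exp (- (y - y')))"
    using assms by (intro mult_right_mono) auto
  also have "\<dots> \<le> y - y'"
    using exp_ge_add_one_self[of "- (y - y')"] by (simp add: algebra_simps)
  finally have 1: "exp (- y') - exp (- y) \<le> y - y'" by simp
  have "exp (- y) \<le> exp (- y')" using assms by simp
  then have "v * (exp (- y') - exp (- y)) \<le> 1 * (exp (- y') - exp (- y))"
    using v1 by (intro mult_right_mono) auto
  then show ?thesis using 1 by (simp add: bomb_a_def algebra_simps)
qed

lemma bG_bdd:
  assumes H: "\<And>w s. 0 \<le> w \<Longrightarrow> 0 \<le> s \<Longrightarrow> 0 \<le> bomb_V v n w s \<and> bomb_V v n w s \<le> 1"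
    and r: "0 \<le> r"
  shows "bdd_above ((\<lambda>y. bomb_a v y * bomb_V v n (z - y) r) ` {0..z})"
proof (rule bdd_aboveI2)
  fix y assume "y \<in> {0..z}"
  then have "0 \<le> bomb_a v y" "bomb_a v y \<le> 1" "0 \<le> bomb_V v n (z - y) r" "bomb_V v n (z - y) r \<le> 1"
    using a_nn a_le1 H r by auto
  then show "bomb_a v y * bomb_V v n (z - y) r \<le> 1" by (simp add: mult_le_one)
qed

lemma bG_upper:
  assumes H: "\<And>w s. 0 \<le> w \<Longrightarrow> 0 \<le> s \<Longrightarrow> 0 \<le> bomb_V v n w s \<and> bomb_V v n w s \<le> 1"
    and "0 \<le> y" "y \<le> z" "0 \<le> r"
  shows "bomb_a v y * bomb_V v n (z - y) r \<le> bG v n z r"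
  unfolding bG_def using assms by (intro cSUP_upper bG_bdd) auto

lemma bG_least:
  assumes "0 \<le> z" "\<And>y. 0 \<le> y \<Longrightarrow> y \<le> z \<Longrightarrow> bomb_a v y * bomb_V v n (z - y) r \<le> M"
  shows "bG v n z r \<le> M"
  unfolding bG_def using assms by (intro cSUP_least) auto

lemma bG_bounds:
  assumes H: "\<And>w s. 0 \<le> w \<Longrightarrow> 0 \<le> s \<Longrightarrow> 0 \<le> bomb_V v n w s \<and> bomb_V v n w s \<le> 1"
    and "0 \<le> z" "0 \<le> r"
  shows "0 \<le> bG v n z r \<and> bG v n z r \<le> 1"
proof
  have "0 \<le> bomb_a v z * bomb_V v n (z - z) r" using H a_nn assms by auto
  also have "\<dots> \<le> bG v n z r" using bG_upper[OF H, of z z r] assms by auto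
  finally show "0 \<le> bG v n z r" .
  show "bG v n z r \<le> 1"
  proof (rule bG_least[OF \<open>0 \<le> z\<close>])
    fix y assume "0 \<le> y" "y \<le> z"
    then have "0 \<le> bomb_a v y" "bomb_a v y \<le> 1" "0 \<le> bomb_V v n (z - y) r" "bomb_V v n (z - y) r \<le> 1"
      using a_nn a_le1 H assms by auto
    then show "bomb_a v y * bomb_V v n (z - y) r \<le> 1" by (simp add: mult_le_one)
  qed
qed

lemma bG_anti:
  assumes H: "\<And>w s. 0 \<le> w \<Longrightarrow> 0 \<le> s \<Longrightarrow> 0 \<le> bomb_V v n w s \<and> bomb_V v n w s \<le> 1"
    and M: "\<And>w s s'. 0 \<le> w \<Longrightarrow> 0 \<le> s \<Longrightarrow> s \<le> s' \<Longrightarrow> bomb_V v n w s' \<le> bomb_V v n w s"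
    and "0 \<le> z" "0 \<le> r1" "r1 \<le> r2"
  shows "bG v n z r2 \<le> bG v n z r1"
proof (rule bG_least[OF \<open>0 \<le> z\<close>])
  fix y assume y: "0 \<le> y" "y \<le> z"
  have "bomb_a v y * bomb_V v n (z - y) r2 \<le> bomb_a v y * bomb_V v n (z - y) r1"
    using y assms a_nn by (intro mult_left_mono M) auto
  also have "\<dots> \<le> bG v n z r1" using bG_upper[OF H] y assms by auto
  finally show "bomb_a v y * bomb_V v n (z - y) r2 \<le> bG v n z r1" .
qed


lemma V_basic:
  "0 \<le> z \<Longrightarrow> 0 \<le> t \<Longrightarrow> 0 \<le> bomb_V v n z t \<and> bomb_V v n z t \<le> 1 \<and>
     (\<forall>t'. t \<le> t' \<longrightarrow> bomb_V v n z t' \<le> bomb_V v n z t)"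
proof (induction n arbitrary: z t)
  case 0
  then show ?case by auto
next
  case (Suc n)
  have H: "\<And>w s. 0 \<le> w \<Longrightarrow> 0 \<le> s \<Longrightarrow> 0 \<le> bomb_V v n w s \<and> bomb_V v n w s \<le> 1"
    using Suc.IH by blast
  have M: "\<And>w s s'. 0 \<le> w \<Longrightarrow> 0 \<le> s \<Longrightarrow> s \<le> s' \<Longrightarrow> bomb_V v n w s' \<le> bomb_V v n w s"
    using Suc.IH by blast
  define G where "G = bG v n z"
  have G01: "\<And>r. 0 \<le> r \<Longrightarrow> 0 \<le> G r \<and> G r \<le> 1"
    unfolding G_def using bG_bounds[OF H] Suc.prems by blast
  have Ganti: "\<And>r1 r2. 0 \<le> r1 \<Longrightarrow> r1 \<le> r2 \<Longrightarrow> G r2 \<le> G r1"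
    unfolding G_def using bG_anti[OF H M] Suc.prems by blast
  have int: "\<And>T. (\<lambda>s. exp (- s) * G (T - s)) integrable_on {0..T}"
    by (rule int_lemma) (auto intro: Ganti G01[THEN conjunct1])
  define I where "I T = integral {0..T} (\<lambda>s. exp (- s) * G (T - s))" for T
  have VI: "\<And>T. bomb_V v (Suc n) z T = exp (- T) + I T"
    unfolding I_def G_def by (simp add: bG_def)
  have Inn: "0 \<le> I T" if "0 \<le> T" for T
    unfolding I_def using G01 that by (intro integral_nonneg[OF int]) auto
  have Ile: "I T \<le> exp (- a) - exp (- T)" if "0 \<le> a" "a \<le> T" "I T = integral {a..T} (\<lambda>s. exp (- s) * G (T - s))" for a T
  proof -
    have "I T \<le> integral {a..T} (\<lambda>s. exp (- s))"
      unfolding that(3)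
    proof (rule integral_le[OF _ exp_integrable])
      show "(\<lambda>s. exp (- s) * G (T - s)) integrable_on {a..T}"
        by (rule integrable_subinterval_real[OF int]) (use that in auto)
    qed (use that G01 in \<open>auto intro!: mult_le_one\<close>)
    also have "\<dots> = exp (- a) - exp (- T)" using exp_int[OF \<open>a \<le> T\<close>] by (simp add: integral_unique)
    finally show ?thesis .
  qed
  show ?case
  proof (intro conjI allI impI)
    show "0 \<le> bomb_V v (Suc n) z t" using VI Inn Suc.prems by (simp add: add_nonneg_nonneg)
    show "bomb_V v (Suc n) z t \<le> 1" using VI Ile[of 0 t] Suc.prems by (simp add: I_def)
    fix t' assume tt: "t \<le> t'"
    have split: "integral {0..t} (\<lambda>s. exp (- s) * G (t' - s)) + integral {t..t'} (\<lambda>s. exp (- s) * G (t' - s)) = I t'"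
      unfolding I_def using Suc.prems tt by (intro Henstock_Kurzweil_Integration.integral_combine[OF _ _ int]) auto
    have p1: "integral {0..t} (\<lambda>s. exp (- s) * G (t' - s)) \<le> I t"
      unfolding I_def
    proof (rule integral_le[OF _ int])
      show "(\<lambda>s. exp (- s) * G (t' - s)) integrable_on {0..t}"
        by (rule integrable_subinterval_real[OF int]) (use tt in auto)
    qed (use tt Suc.prems in \<open>auto intro!: mult_left_mono Ganti\<close>)
    have p2: "integral {t..t'} (\<lambda>s. exp (- s) * G (t' - s)) \<le> exp (- t) - exp (- t')"
    proof -
      have "integral {t..t'} (\<lambda>s. exp (- s) * G (t' - s)) \<le> integral {t..t'} (\<lambda>s. exp (- s))"
      proof (rule integral_le[OF _ exp_integrable])
        show "(\<lambda>s. exp (- s) * G (t' - s)) integrable_on {t..t'}"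
          by (rule integrable_subinterval_real[OF int]) (use tt Suc.prems in auto)
      qed (use tt Suc.prems G01 in \<open>auto intro!: mult_le_one\<close>)
      also have "\<dots> = exp (- t) - exp (- t')" using exp_int[OF tt] by (simp add: integral_unique)
      finally show ?thesis .
    qed
    show "bomb_V v (Suc n) z t' \<le> bomb_V v (Suc n) z t"
      using VI[of t] VI[of t'] split p1 p2 by linarith
  qed
qed

end




context bomber begin

lemma H_all: "0 \<le> w \<Longrightarrow> 0 \<le> s \<Longrightarrow> 0 \<le> bomb_V v n w s \<and> bomb_V v n w s \<le> 1"
  using V_basic by blast

lemma M_all: "0 \<le> w \<Longrightarrow> 0 \<le> s \<Longrightarrow> s \<le> s' \<Longrightarrow> bomb_V v n w s' \<le> bomb_V v n w s"
  using V_basic by blast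

lemma bG01: "0 \<le> z \<Longrightarrow> 0 \<le> r \<Longrightarrow> 0 \<le> bG v n z r \<and> bG v n z r \<le> 1"
  using bG_bounds[OF H_all] by blast

lemma bG_up: "0 \<le> y \<Longrightarrow> y \<le> z \<Longrightarrow> 0 \<le> r \<Longrightarrow> bomb_a v y * bomb_V v n (z - y) r \<le> bG v n z r"
  using bG_upper[OF H_all] by blast

lemma bG_int: "0 \<le> z \<Longrightarrow> (\<lambda>s. exp (- s) * bG v n z (T - s)) integrable_on {0..T}"
  by (rule int_lemma) (auto intro: bG_anti[OF H_all M_all] bG01[THEN conjunct1])

lemma V_mono_z: "0 \<le> z \<Longrightarrow> z \<le> z' \<Longrightarrow> 0 \<le> t \<Longrightarrow> bomb_V v n z t \<le> bomb_V v n z' t"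
proof (induction n arbitrary: z z' t)
  case 0
  then show ?case by simp
next
  case (Suc n)
  have G: "bG v n z r \<le> bG v n z' r" if "0 \<le> r" for r
  proof (rule bG_least[OF \<open>0 \<le> z\<close>])
    fix y assume y: "0 \<le> y" "y \<le> z"
    have "bomb_a v y * bomb_V v n (z - y) r \<le> bomb_a v y * bomb_V v n (z' - y) r"
      using y Suc that a_nn by (intro mult_left_mono) auto
    also have "\<dots> \<le> bG v n z' r" using y Suc.prems that by (intro bG_up) auto
    finally show "bomb_a v y * bomb_V v n (z - y) r \<le> bG v n z' r" .
  qed
  have "integral {0..t} (\<lambda>s. exp (- s) * bG v n z (t - s)) \<le> integral {0..t} (\<lambda>s. exp (- s) * bG v n z' (t - s))"
    using Suc.prems by (intro integral_le bG_int) (auto intro!: mult_left_mono G)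
  then show ?case by (simp only: bomb_V_Suc')
qed

lemma V_lip: "0 \<le> z \<Longrightarrow> 0 \<le> d \<Longrightarrow> 0 \<le> t \<Longrightarrow> bomb_V v n (z + d) t \<le> bomb_V v n z t + d"
proof (induction n arbitrary: z d t)
  case 0
  then show ?case by simp
next
  case (Suc n)
  have G: "bG v n (z + d) r \<le> bG v n z r + d" if r: "0 \<le> r" for r
  proof (rule bG_least)
    show "0 \<le> z + d" using Suc.prems by simp
    fix y assume y: "0 \<le> y" "y \<le> z + d"
    show "bomb_a v y * bomb_V v n (z + d - y) r \<le> bG v n z r + d"
    proof (cases "d \<le> y")
      case True
      have e: "z + d - y = z - (y - d)" by simp
      have V01: "0 \<le> bomb_V v n (z - (y - d)) r" "bomb_V v n (z - (y - d)) r \<le> 1"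
        using H_all y True r by auto
      have "bomb_a v y * bomb_V v n (z + d - y) r \<le> (bomb_a v (y - d) + d) * bomb_V v n (z - (y - d)) r"
        unfolding e using a_lip[of "y - d" y] True V01 Suc.prems by (intro mult_right_mono) auto
      also have "\<dots> = bomb_a v (y - d) * bomb_V v n (z - (y - d)) r + d * bomb_V v n (z - (y - d)) r"
        by (simp add: algebra_simps)
      also have "\<dots> \<le> bG v n z r + d"
        using bG_up[of "y - d" z r n] True y r V01 Suc.prems
        by (intro add_mono) (auto simp: mult_left_le)
      finally show ?thesis .
    next
      case False
      have e: "z + d - y = z + (d - y)" by simp
      have IH: "bomb_V v n (z + (d - y)) r \<le> bomb_V v n z r + (d - y)"
        using Suc.IH[of z "d - y" r] Suc.prems False r by auto
      have V01: "0 \<le> bomb_V v n z r" "bomb_V v n z r \<le> 1" using H_all Suc.prems r by auto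
      have ay: "0 \<le> bomb_a v y" "bomb_a v y \<le> 1" "bomb_a v y \<le> bomb_a v 0 + y"
        using a_nn a_le1 a_lip[of 0 y] y by auto
      have "bomb_a v y * bomb_V v n (z + d - y) r \<le> bomb_a v y * (bomb_V v n z r + (d - y))"
        unfolding e using IH ay by (intro mult_left_mono) auto
      also have "\<dots> = bomb_a v y * bomb_V v n z r + bomb_a v y * (d - y)" by (simp add: algebra_simps)
      also have "\<dots> \<le> (bomb_a v 0 + y) * bomb_V v n z r + 1 * (d - y)"
        using ay V01 False by (intro add_mono mult_right_mono) auto
      also have "\<dots> \<le> bomb_a v 0 * bomb_V v n (z - 0) r + y + (d - y)"
        using V01 y by (simp add: algebra_simps mult_left_le)
      also have "\<dots> \<le> bG v n z r + d"
        using bG_up[of 0 z r n] Suc.prems r by simp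
      finally show ?thesis .
    qed
  qed
  have i1: "(\<lambda>s. exp (- s) * bG v n z (t - s)) integrable_on {0..t}" using Suc.prems by (intro bG_int) auto
  have i2: "(\<lambda>s. d * exp (- s)) integrable_on {0..t}"
    by (intro integrable_on_mult_right exp_integrable)
  have "integral {0..t} (\<lambda>s. exp (- s) * bG v n (z + d) (t - s))
      \<le> integral {0..t} (\<lambda>s. exp (- s) * bG v n z (t - s) + d * exp (- s))"
  proof (rule integral_le[OF bG_int integrable_add[OF i1 i2]])
    show "0 \<le> z + d" using Suc.prems by simp
    fix s assume s: "s \<in> {0..t}"
    have "exp (- s) * bG v n (z + d) (t - s) \<le> exp (- s) * (bG v n z (t - s) + d)"
      using s G by (intro mult_left_mono) auto
    then show "exp (- s) * bG v n (z + d) (t - s) \<le> exp (- s) * bG v n z (t - s) + d * exp (- s)"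
      by (simp add: algebra_simps)
  qed
  also have "\<dots> = integral {0..t} (\<lambda>s. exp (- s) * bG v n z (t - s)) + d * (1 - exp (- t))"
  proof -
    have "integral {0..t} (\<lambda>s. d * exp (- s)) = d * (exp (- 0) - exp (- t))"
      using exp_int[of 0 t] Suc.prems by (simp add: integral_unique has_integral_mult_right)
    then show ?thesis using integral_add[OF i1 i2] by simp
  qed
  also have "\<dots> \<le> integral {0..t} (\<lambda>s. exp (- s) * bG v n z (t - s)) + d"
    using Suc.prems by (simp add: mult_left_le)
  finally have fin: "integral {0..t} (\<lambda>s. exp (- s) * bG v n (z + d) (t - s)) \<le> integral {0..t} (\<lambda>s. exp (- s) * bG v n z (t - s)) + d" .
  show ?case unfolding bomb_V_Suc' using fin by linarith
qed

end



context bomber begin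

definition Qs :: "nat \<Rightarrow> real \<Rightarrow> real" where
  "Qs n t = (\<Sum>k\<le>n. ((1 - v) * t) ^ k / fact k)"
definition Rs :: "nat \<Rightarrow> real \<Rightarrow> real" where
  "Rs n t = (\<Sum>k\<le>n. (1 - v) ^ k * t ^ (k + 1) / fact (k + 1))"
definition Rl :: "real \<Rightarrow> real" where
  "Rl t = (if v = 1 then t else (exp ((1 - v) * t) - 1) / (1 - v))"
definition Pall :: "real \<Rightarrow> real \<Rightarrow> real" where
  "Pall z t = exp (- t) * (1 + bomb_a v z * Rl t)"

lemma Rl_exp: "1 + (1 - v) * Rl t = exp ((1 - v) * t)"
  by (simp add: Rl_def)

lemma Rl_0: "Rl 0 = 0" by (simp add: Rl_def)

lemma Rl_mono: "s \<le> s' \<Longrightarrow> Rl s \<le> Rl s'"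
proof -
  assume "s \<le> s'"
  moreover have "v < 1 \<Longrightarrow> exp ((1 - v) * s) \<le> exp ((1 - v) * s')"
    using \<open>s \<le> s'\<close> by (simp add: mult_left_mono)
  ultimately show ?thesis using v1 by (auto simp: Rl_def divide_right_mono)
qed

lemma Rl_pos: "0 < s \<Longrightarrow> 0 < Rl s"
proof -
  assume s: "0 < s"
  have "v < 1 \<Longrightarrow> 1 < exp ((1 - v) * s)" using s by simp
  then show ?thesis using v1 s by (auto simp: Rl_def)
qed

lemma Rl_nn: "0 \<le> s \<Longrightarrow> 0 \<le> Rl s"
  using Rl_pos Rl_0 by (cases "s = 0") (auto simp: less_le)

lemma term_int:
  assumes t: "0 \<le> t"
  shows "((\<lambda>s. ((1 - v) * (t - s)) ^ k / fact k) has_integral ((1 - v) ^ k * t ^ (k + 1) / fact (k + 1))) {0..t}"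
proof -
  define F where "F s = - ((1 - v) ^ k * (t - s) ^ (k + 1) / fact (k + 1))" for s
  have d: "(F has_real_derivative ((1 - v) * (t - s)) ^ k / fact k) (at s within {0..t})" for s
  proof -
    have "(F has_real_derivative - ((1 - v) ^ k * (real (k + 1) * (t - s) ^ k * (0 - 1)) / fact (k + 1))) (at s within {0..t})"
      unfolding F_def by (intro derivative_eq_intros refl) auto
    moreover have "- ((1 - v) ^ k * (real (k + 1) * (t - s) ^ k * (0 - 1)) / fact (k + 1)) = ((1 - v) * (t - s)) ^ k / fact k"
    proof -
      have e1: "((1 - v) * (t - s)) ^ k = (1 - v) ^ k * (t - s) ^ k" by (rule power_mult_distrib)
      have e2: "fact (k + 1) = (real (k + 1) * fact k :: real)" by simp
      show ?thesis unfolding e1 e2 by (simp del: of_nat_Suc)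
    qed
    ultimately show ?thesis by simp
  qed
  have "((\<lambda>s. ((1 - v) * (t - s)) ^ k / fact k) has_integral (F t - F 0)) {0..t}"
    using t d by (intro fundamental_theorem_of_calculus) (auto simp: has_real_derivative_iff_has_vector_derivative)
  then show ?thesis by (simp add: F_def)
qed

lemma Qs_int: "0 \<le> t \<Longrightarrow> ((\<lambda>s. Qs n (t - s)) has_integral Rs n t) {0..t}"
  unfolding Qs_def Rs_def by (intro has_integral_sum term_int) auto

lemma Qs_Suc: "Qs (Suc n) t = 1 + (1 - v) * Rs n t"
  unfolding Qs_def Rs_def
  by (subst sum.atMost_Suc_shift) (simp add: sum_distrib_left power_mult_distrib mult_ac)

lemma bG_zero: "bG v n 0 r = bomb_a v 0 * bomb_V v n 0 r"
  by (simp add: bG_def)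

lemma V_zero: "0 \<le> t \<Longrightarrow> bomb_V v n 0 t = exp (- t) * Qs n t"
proof (induction n arbitrary: t)
  case 0
  then show ?case by (simp add: Qs_def)
next
  case (Suc n)
  have "((\<lambda>s. exp (- s) * bG v n 0 (t - s)) has_integral ((1 - v) * exp (- t) * Rs n t)) {0..t}"
  proof (rule has_integral_eq[OF _ has_integral_mult_right[OF Qs_int[OF Suc.prems]]])
    fix s assume s: "s \<in> {0..t}"
    have "exp (- s) * bG v n 0 (t - s) = (1 - v) * (exp (- s) * exp (- (t - s))) * Qs n (t - s)"
      using s Suc.IH[of "t - s"] by (simp add: bG_zero a_zero)
    also have "exp (- s) * exp (- (t - s)) = exp (- t)" by (simp flip: exp_add)
    finally show "(1 - v) * exp (- t) * Qs n (t - s) = exp (- s) * bG v n 0 (t - s)" by simp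
  qed
  then show ?case
    by (simp only: bomb_V_Suc' integral_unique Qs_Suc) (simp add: algebra_simps)
qed

end



context bomber begin

lemma V_lower:
  assumes z: "0 \<le> z" and t: "0 \<le> t"
  shows "exp (- t) * (1 + bomb_a v z * Rs n t) \<le> bomb_V v (Suc n) z t"
proof -
  have hi: "((\<lambda>s. bomb_a v z * exp (- t) * Qs n (t - s)) has_integral (bomb_a v z * exp (- t) * Rs n t)) {0..t}"
    by (rule has_integral_mult_right[OF Qs_int[OF t]])
  have "bomb_a v z * exp (- t) * Rs n t \<le> integral {0..t} (\<lambda>s. exp (- s) * bG v n z (t - s))"
    unfolding integral_unique[OF hi, symmetric]
  proof (rule integral_le[OF has_integral_integrable[OF hi] bG_int[OF z]])
    fix s assume s: "s \<in> {0..t}"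
    have "bomb_a v z * exp (- t) * Qs n (t - s) = exp (- s) * (bomb_a v z * bomb_V v n (z - z) (t - s))"
      using s V_zero[of "t - s" n] by (simp add: mult_ac flip: exp_add)
    also have "\<dots> \<le> exp (- s) * bG v n z (t - s)"
      using s z by (intro mult_left_mono bG_up) auto
    finally show "bomb_a v z * exp (- t) * Qs n (t - s) \<le> exp (- s) * bG v n z (t - s)" .
  qed
  then show ?thesis by (simp only: bomb_V_Suc') (simp add: algebra_simps)
qed

lemma Qs_lim: "(\<lambda>n. Qs n t) \<longlonglongrightarrow> exp ((1 - v) * t)"
proof -
  have "(\<lambda>n. \<Sum>i<n. ((1 - v) * t) ^ i / fact i) \<longlonglongrightarrow> exp ((1 - v) * t)"
    using exp_converges[of "(1 - v) * t"] by (simp add: sums_def divide_inverse mult.commute)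
  then have "(\<lambda>n. \<Sum>i<Suc n. ((1 - v) * t) ^ i / fact i) \<longlonglongrightarrow> exp ((1 - v) * t)"
    by (rule LIMSEQ_Suc)
  then show ?thesis by (simp only: lessThan_Suc_atMost Qs_def)
qed

lemma Rs_v1: "v = 1 \<Longrightarrow> Rs n t = t"
proof -
  assume v: "v = 1"
  have "(\<Sum>k\<le>n. (1 - v) ^ k * t ^ (k + 1) / fact (k + 1)) = t"
    using v by (induction n) auto
  then show ?thesis unfolding Rs_def .
qed

lemma Rs_lim: "(\<lambda>n. Rs n t) \<longlonglongrightarrow> Rl t"
proof (cases "v = 1")
  case True
  have "Rl t = t" unfolding Rl_def using True by simp
  then show ?thesis using Rs_v1[OF True] by simp
next
  case False
  then have nz: "1 - v \<noteq> 0" by simp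
  have e: "Rs n t = (Qs (Suc n) t - 1) / (1 - v)" for n
    using nz by (simp add: Qs_Suc)
  have "(\<lambda>n. (Qs (Suc n) t - 1) / (1 - v)) \<longlonglongrightarrow> (exp ((1 - v) * t) - 1) / (1 - v)"
    using nz by (intro tendsto_intros LIMSEQ_Suc[OF Qs_lim])
  then show ?thesis using False by (simp add: e Rl_def)
qed

lemma P_bdd: "0 \<le> z \<Longrightarrow> 0 \<le> t \<Longrightarrow> bdd_above (range (\<lambda>n. bomb_V v n z t))"
  using H_all by (intro bdd_aboveI2[of _ _ 1]) auto

lemma P_ge: "0 \<le> z \<Longrightarrow> 0 \<le> t \<Longrightarrow> bomb_V v n z t \<le> bomb_P v z t"
  unfolding bomb_P_def by (intro cSUP_upper P_bdd) auto

lemma P_le: "(\<And>n. bomb_V v n z t \<le> M) \<Longrightarrow> bomb_P v z t \<le> M"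
  unfolding bomb_P_def by (intro cSUP_least) auto

lemma P01: "0 \<le> z \<Longrightarrow> 0 \<le> t \<Longrightarrow> 0 \<le> bomb_P v z t \<and> bomb_P v z t \<le> 1"
proof -
  assume a: "0 \<le> z" "0 \<le> t"
  have "0 \<le> bomb_V v 0 z t" using H_all[OF a] by blast
  also have "\<dots> \<le> bomb_P v z t" by (rule P_ge[OF a])
  finally have "0 \<le> bomb_P v z t" .
  moreover have "bomb_P v z t \<le> 1"
    by (rule P_le) (use H_all[OF a] in blast)
  ultimately show ?thesis by blast
qed

lemma P_lower: "0 \<le> z \<Longrightarrow> 0 \<le> t \<Longrightarrow> Pall z t \<le> bomb_P v z t"
proof -
  assume z: "0 \<le> z" and t: "0 \<le> t"
  have "(\<lambda>n. exp (- t) * (1 + bomb_a v z * Rs n t)) \<longlonglongrightarrow> exp (- t) * (1 + bomb_a v z * Rl t)"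
    by (intro tendsto_intros Rs_lim)
  moreover have "\<forall>n\<ge>0. exp (- t) * (1 + bomb_a v z * Rs n t) \<le> bomb_P v z t"
    using V_lower[OF z t] P_ge[OF z t] by (meson order_trans)
  ultimately show ?thesis unfolding Pall_def using LIMSEQ_le_const2 by blast
qed

lemma P0_lower: "0 \<le> t \<Longrightarrow> exp (- t) * exp ((1 - v) * t) \<le> bomb_P v 0 t"
proof -
  assume t: "0 \<le> t"
  have "(\<lambda>n. exp (- t) * Qs n t) \<longlonglongrightarrow> exp (- t) * exp ((1 - v) * t)"
    by (intro tendsto_intros Qs_lim)
  moreover have "\<forall>n\<ge>0. exp (- t) * Qs n t \<le> bomb_P v 0 t"
    using V_zero[OF t] P_ge[OF _ t, of 0] by simp
  ultimately show ?thesis using LIMSEQ_le_const2 by blast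
qed

lemma P_mono_z: "0 \<le> z \<Longrightarrow> z \<le> z' \<Longrightarrow> 0 \<le> t \<Longrightarrow> bomb_P v z t \<le> bomb_P v z' t"
proof (rule P_le)
  fix n assume "0 \<le> z" "z \<le> z'" "0 \<le> t"
  then show "bomb_V v n z t \<le> bomb_P v z' t"
    using V_mono_z[of z z' t n] P_ge[of z' t n] by linarith
qed

lemma P_lip: "0 \<le> z \<Longrightarrow> 0 \<le> d \<Longrightarrow> 0 \<le> t \<Longrightarrow> bomb_P v (z + d) t \<le> bomb_P v z t + d"
proof (rule P_le)
  fix n assume "0 \<le> z" "0 \<le> d" "0 \<le> t"
  then show "bomb_V v n (z + d) t \<le> bomb_P v z t + d"
    using V_lip[of z d t n] P_ge[of z t n] by linarith
qed

end



context bomber begin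

definition Reg :: "real \<Rightarrow> real \<Rightarrow> bool" where
  "Reg z s \<longleftrightarrow> 0 \<le> z \<and> 0 \<le> s \<and> exp z * Rl s \<le> 1 + Rl s"

lemma Reg_down:
  assumes "Reg z s" "0 \<le> z'" "z' \<le> z" "0 \<le> s'" "s' \<le> s"
  shows "Reg z' s'"
proof -
  have "Rl s' * (exp z' - 1) \<le> Rl s * (exp z - 1)"
    using assms by (intro mult_mono Rl_mono Rl_nn) (auto simp: Reg_def)
  also have "\<dots> \<le> 1" using assms by (simp add: Reg_def algebra_simps)
  finally show ?thesis using assms by (simp add: Reg_def algebra_simps)
qed

lemma ident:
  fixes p r R :: real
  assumes "p \<noteq> 0"
  shows "(1 - v * p) * (1 + (1 - v * (r / p)) * R) - (1 - v * r) * (1 + (1 - v) * R) = (p - r) * v * (R / p - 1 - R)"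
  using assms by (simp add: field_simps)

lemma diff_form:
  "bomb_a v y * Pall (z - y) s - bomb_a v z * Pall 0 s
     = exp (- s) * ((exp (- y) - exp (- z)) * v * (Rl s * exp y - 1 - Rl s))"
proof -
  have e: "exp (- (z - y)) = exp (- z) / exp (- y)" by (simp flip: exp_diff)
  have "bomb_a v y * Pall (z - y) s - bomb_a v z * Pall 0 s
     = exp (- s) * ((1 - v * exp (- y)) * (1 + (1 - v * (exp (- z) / exp (- y))) * Rl s) - (1 - v * exp (- z)) * (1 + (1 - v) * Rl s))"
    unfolding Pall_def bomb_a_def e by (simp add: algebra_simps)
  also have "\<dots> = exp (- s) * ((exp (- y) - exp (- z)) * v * (Rl s / exp (- y) - 1 - Rl s))"
    by (subst ident) auto
  finally show ?thesis by (simp add: exp_minus field_simps)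
qed

lemma local_le:
  assumes "Reg z s" "0 \<le> y" "y \<le> z"
  shows "bomb_a v y * Pall (z - y) s \<le> bomb_a v z * Pall 0 s"
proof -
  have "exp (- y) - exp (- z) \<ge> 0" using assms by simp
  moreover have "Rl s * exp y \<le> Rl s * exp z" using assms Rl_nn by (intro mult_left_mono) (auto simp: Reg_def)
  then have "Rl s * exp y - 1 - Rl s \<le> 0" using assms by (simp add: Reg_def mult.commute)
  ultimately have "(exp (- y) - exp (- z)) * v * (Rl s * exp y - 1 - Rl s) \<le> 0"
    using v0 by (simp add: mult_nonneg_nonpos)
  then have "exp (- s) * ((exp (- y) - exp (- z)) * v * (Rl s * exp y - 1 - Rl s)) \<le> 0"
    by (simp add: mult_nonneg_nonpos)
  then show ?thesis using diff_form[of y z s] by linarith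
qed

lemma local_lt:
  assumes "Reg z s" "0 < s" "0 \<le> y" "y < z"
  shows "bomb_a v y * Pall (z - y) s < bomb_a v z * Pall 0 s"
proof -
  have "exp (- y) - exp (- z) > 0" using assms by simp
  moreover have "Rl s * exp y < Rl s * exp z" using assms Rl_pos by (intro mult_strict_left_mono) auto
  then have "Rl s * exp y - 1 - Rl s < 0" using assms by (simp add: Reg_def mult.commute)
  ultimately have "(exp (- y) - exp (- z)) * v * (Rl s * exp y - 1 - Rl s) < 0"
    using v0 by (simp add: mult_pos_neg)
  then have "exp (- s) * ((exp (- y) - exp (- z)) * v * (Rl s * exp y - 1 - Rl s)) < 0"
    by (simp add: mult_pos_neg)
  then show ?thesis using diff_form[of y z s] by linarith
qed

lemma local_gt:
  assumes "0 < s" "0 < z" "exp z * Rl s > 1 + Rl s"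
  shows "\<exists>y. 0 < y \<and> y < z \<and> bomb_a v y * Pall (z - y) s > bomb_a v z * Pall 0 s"
proof -
  define R where "R = Rl s"
  have R: "0 < R" using Rl_pos assms by (simp add: R_def)
  have rlt: "exp (- z) < R / (1 + R)"
    using assms R by (simp add: R_def exp_minus field_simps)
  define p where "p = (exp (- z) + R / (1 + R)) / 2"
  have avg: "a < (a + b) / 2 \<and> (a + b) / 2 < b" if "a < b" for a b :: real using that by simp
  have p1a: "exp (- z) < p" unfolding p_def using avg[OF rlt] by blast
  have p1b: "p < R / (1 + R)" unfolding p_def using avg[OF rlt] by blast
  note p1 = p1a p1b
  have p0: "0 < p" using p1 by (smt (verit) exp_gt_zero)
  have "R / (1 + R) < 1" using R by simp
  then have pl1: "p < 1" using p1 by linarith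
  define y where "y = - ln p"
  have ey: "exp (- y) = p" using p0 by (simp add: y_def)
  have y0: "0 < y" using pl1 p0 by (simp add: y_def)
  have yz: "y < z" using p1(1) p0 by (simp add: y_def) (metis exp_less_cancel_iff exp_ln ln_less_cancel_iff exp_gt_zero minus_less_iff)
  have "exp y = 1 / p" using ey by (metis exp_minus inverse_eq_divide inverse_inverse_eq)
  moreover have "1 + R < R / p" using p1b p0 R by (simp add: field_simps)
  ultimately have "R * exp y - 1 - R > 0" by simp
  then have "(exp (- y) - exp (- z)) * v * (R * exp y - 1 - R) > 0"
    using v0 p1 ey by simp
  then have "exp (- s) * ((exp (- y) - exp (- z)) * v * (R * exp y - 1 - R)) > 0" by simp
  then show ?thesis using diff_form[of y z s] y0 yz unfolding R_def by (intro exI[of _ y]) auto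
qed

lemma exp_int2:
  assumes s: "0 \<le> s"
  shows "((\<lambda>\<sigma>. exp ((1 - v) * (s - \<sigma>))) has_integral Rl s) {0..s}"
proof (cases "v = 1")
  case True
  have "Rl s = s" unfolding Rl_def using True by simp
  have c: "((\<lambda>\<sigma>. 1::real) has_integral s) {0..s}" using has_integral_const_real[of "1::real" 0 s] s by simp
  have f: "(\<lambda>\<sigma>. exp ((1 - v) * (s - \<sigma>))) = (\<lambda>\<sigma>. 1)" using True by simp
  show ?thesis unfolding f \<open>Rl s = s\<close> by (rule c)
next
  case False
  then have nz: "1 - v \<noteq> 0" by simp
  define F where "F \<sigma> = - exp ((1 - v) * (s - \<sigma>)) / (1 - v)" for \<sigma>
  have d: "(F has_real_derivative exp ((1 - v) * (s - \<sigma>))) (at \<sigma> within {0..s})" for \<sigma>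
  proof -
    have "(F has_real_derivative (- (exp ((1 - v) * (s - \<sigma>)) * ((1 - v) * (0 - 1))) / (1 - v))) (at \<sigma> within {0..s})"
      unfolding F_def using nz by (intro derivative_eq_intros refl) auto
    moreover have "(- (exp ((1 - v) * (s - \<sigma>)) * ((1 - v) * (0 - 1))) / (1 - v)) = exp ((1 - v) * (s - \<sigma>))"
      using nz False by (simp add: field_simps)
    ultimately show ?thesis by simp
  qed
  have "((\<lambda>\<sigma>. exp ((1 - v) * (s - \<sigma>))) has_integral (F s - F 0)) {0..s}"
    using s d by (intro fundamental_theorem_of_calculus) (auto simp: has_real_derivative_iff_has_vector_derivative)
  moreover have "F s - F 0 = Rl s" unfolding F_def Rl_def using False nz by (simp add: diff_divide_distrib)
  ultimately show ?thesis by simp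
qed

lemma V_upper: "Reg z s \<Longrightarrow> bomb_V v n z s \<le> Pall z s"
proof (induction n arbitrary: z s)
  case 0
  then show ?case using a_nn Rl_nn by (simp add: Pall_def Reg_def)
next
  case (Suc n)
  have z: "0 \<le> z" and s: "0 \<le> s" using Suc.prems by (auto simp: Reg_def)
  have G: "bG v n z r \<le> bomb_a v z * Pall 0 r" if r: "0 \<le> r" "r \<le> s" for r
  proof (rule bG_least[OF z])
    fix y assume y: "0 \<le> y" "y \<le> z"
    have R1: "Reg z r" using Reg_down[OF Suc.prems] z r by auto
    have R2: "Reg (z - y) r" using Reg_down[OF R1, of "z - y" r] y r by auto
    have "bomb_a v y * bomb_V v n (z - y) r \<le> bomb_a v y * Pall (z - y) r"
      using Suc.IH[OF R2] a_nn y by (intro mult_left_mono) auto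
    also have "\<dots> \<le> bomb_a v z * Pall 0 r" using local_le[OF R1 y] .
    finally show "bomb_a v y * bomb_V v n (z - y) r \<le> bomb_a v z * Pall 0 r" .
  qed
  have hi: "((\<lambda>\<sigma>. bomb_a v z * exp (- s) * exp ((1 - v) * (s - \<sigma>))) has_integral (bomb_a v z * exp (- s) * Rl s)) {0..s}"
    by (rule has_integral_mult_right[OF exp_int2[OF s]])
  have "integral {0..s} (\<lambda>\<sigma>. exp (- \<sigma>) * bG v n z (s - \<sigma>)) \<le> bomb_a v z * exp (- s) * Rl s"
    unfolding integral_unique[OF hi, symmetric]
  proof (rule integral_le[OF bG_int[OF z] has_integral_integrable[OF hi]])
    fix \<sigma> assume sg: "\<sigma> \<in> {0..s}"
    have "exp (- \<sigma>) * bG v n z (s - \<sigma>) \<le> exp (- \<sigma>) * (bomb_a v z * Pall 0 (s - \<sigma>))"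
      using sg G by (intro mult_left_mono) auto
    also have "\<dots> = bomb_a v z * (exp (- \<sigma>) * exp (- (s - \<sigma>))) * (1 + (1 - v) * Rl (s - \<sigma>))"
      by (simp add: Pall_def a_zero mult_ac)
    also have "\<dots> = bomb_a v z * exp (- s) * exp ((1 - v) * (s - \<sigma>))"
      by (simp add: Rl_exp flip: exp_add)
    finally show "exp (- \<sigma>) * bG v n z (s - \<sigma>) \<le> bomb_a v z * exp (- s) * exp ((1 - v) * (s - \<sigma>))" .
  qed
  then show ?case unfolding bomb_V_Suc' Pall_def by (simp add: algebra_simps)
qed

lemma P_upper: "Reg z s \<Longrightarrow> bomb_P v z s \<le> Pall z s"
  by (rule P_le) (rule V_upper)

end



context bomber begin

lemma P0_eq: "0 \<le> t \<Longrightarrow> Pall 0 t \<le> bomb_P v 0 t"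
  using P0_lower by (simp add: Pall_def a_zero Rl_exp)

lemma h_bdd: "0 \<le> t \<Longrightarrow> bdd_above ((\<lambda>y. bomb_a v y * bomb_P v (x - y) t) ` {0..x})"
proof (rule bdd_aboveI2)
  fix y assume "0 \<le> t" "y \<in> {0..x}"
  then have "0 \<le> bomb_a v y" "bomb_a v y \<le> 1" "0 \<le> bomb_P v (x - y) t" "bomb_P v (x - y) t \<le> 1"
    using a_nn a_le1 P01 by auto
  then show "bomb_a v y * bomb_P v (x - y) t \<le> 1" by (simp add: mult_le_one)
qed

lemma K_small:
  assumes t: "0 < t" and x: "0 < x" and c: "exp x * Rl t \<le> 1 + Rl t"
  shows "bomb_K v x t = {x}"
proof -
  define h where "h y = bomb_a v y * bomb_P v (x - y) t" for y
  have Rx: "Reg x t" using x t c by (simp add: Reg_def)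
  have hx: "h x = bomb_a v x * bomb_P v 0 t" by (simp add: h_def)
  have lt: "h y < h x" if y: "0 \<le> y" "y < x" for y
  proof -
    have R2: "Reg (x - y) t" using Reg_down[OF Rx, of "x - y" t] y t by auto
    have "h y \<le> bomb_a v y * Pall (x - y) t"
      unfolding h_def using P_upper[OF R2] a_nn y by (intro mult_left_mono) auto
    also have "\<dots> < bomb_a v x * Pall 0 t" using local_lt[OF Rx t y] .
    also have "\<dots> \<le> bomb_a v x * bomb_P v 0 t"
      using P0_eq t a_nn x by (intro mult_left_mono) auto
    finally show ?thesis using hx by simp
  qed
  have H: "bomb_H v x t = h x"
    unfolding bomb_H_def h_def[symmetric]
  proof (rule cSup_eq_maximum)
    show "h x \<in> h ` {0..x}" using x by auto
    fix w assume "w \<in> h ` {0..x}"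
    then obtain y where "y \<in> {0..x}" "w = h y" by auto
    then show "w \<le> h x" using lt[of y] by (cases "y = x") auto
  qed
  show ?thesis
  proof (rule set_eqI)
    fix k
    show "k \<in> bomb_K v x t \<longleftrightarrow> k \<in> {x}"
    proof
      assume "k \<in> bomb_K v x t"
      then have k: "k \<in> {0..x}" "h k = h x" unfolding bomb_K_def H h_def by auto
      then show "k \<in> {x}" using lt[of k] by (cases "k = x") auto
    next
      assume "k \<in> {x}"
      then show "k \<in> bomb_K v x t" unfolding bomb_K_def H h_def using x by auto
    qed
  qed
qed

lemma P_cont: "0 \<le> t \<Longrightarrow> continuous_on {0..x} (\<lambda>y. bomb_P v (x - y) t)"
proof -
  assume t: "0 \<le> t"
  have "1-lipschitz_on {0..x} (\<lambda>y. bomb_P v (x - y) t)"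
  proof (rule lipschitz_onI)
    fix y y' assume y: "y \<in> {0..x}" "y' \<in> {0..x}"
    have key: "\<bar>bomb_P v (x - a) t - bomb_P v (x - b) t\<bar> \<le> b - a" if "a \<in> {0..x}" "b \<in> {0..x}" "a \<le> b" for a b
    proof -
      have "bomb_P v (x - b + (b - a)) t \<le> bomb_P v (x - b) t + (b - a)"
        using that t by (intro P_lip) auto
      moreover have "bomb_P v (x - b) t \<le> bomb_P v (x - a) t"
        using that t by (intro P_mono_z) auto
      ultimately show ?thesis by simp
    qed
    show "dist (bomb_P v (x - y) t) (bomb_P v (x - y') t) \<le> 1 * dist y y'"
    proof (cases "y \<le> y'")
      case True
      then show ?thesis using key[OF y True] by (simp add: dist_real_def)
    next
      case False
      then show ?thesis using key[of y' y] y by (simp add: dist_real_def abs_minus_commute)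
    qed
  qed simp
  then show ?thesis by (rule lipschitz_on_continuous_on)
qed

lemma K_big:
  assumes t: "0 < t" and x: "0 < x" and c: "exp x * Rl t > 1 + Rl t"
  shows "bomb_K v x t \<noteq> {} \<and> (\<forall>k \<in> bomb_K v x t. k < x)"
proof -
  define h where "h y = bomb_a v y * bomb_P v (x - y) t" for y
  have bdd: "bdd_above (h ` {0..x})" unfolding h_def using h_bdd t by simp
  have Hdef: "bomb_H v x t = Sup (h ` {0..x})" unfolding bomb_H_def h_def ..
  obtain y0 where y0: "0 < y0" "y0 < x" "bomb_a v y0 * Pall (x - y0) t > bomb_a v x * Pall 0 t"
    using local_gt[OF t x c] by blast
  have R0: "Reg 0 t" using t Rl_nn by (simp add: Reg_def)
  have "h x = bomb_a v x * bomb_P v 0 t" by (simp add: h_def)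
  also have "\<dots> \<le> bomb_a v x * Pall 0 t" using P_upper[OF R0] a_nn x by (intro mult_left_mono) auto
  also have "\<dots> < bomb_a v y0 * Pall (x - y0) t" using y0 by simp
  also have "\<dots> \<le> h y0" unfolding h_def using P_lower[of "x - y0" t] y0 t a_nn by (intro mult_left_mono) auto
  also have "\<dots> \<le> bomb_H v x t" unfolding Hdef using bdd y0 by (intro cSUP_upper) auto
  finally have hx: "h x < bomb_H v x t" .
  have cont: "continuous_on {0..x} h"
    unfolding h_def bomb_a_def using P_cont t by (intro continuous_intros) auto
  obtain ym where ym: "ym \<in> {0..x}" "\<forall>y\<in>{0..x}. h y \<le> h ym"
    using continuous_attains_sup[OF compact_Icc _ cont] x by auto
  have "bomb_H v x t = h ym" unfolding Hdef using ym by (intro cSup_eq_maximum) auto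
  then have "ym \<in> bomb_K v x t" unfolding bomb_K_def h_def using ym by auto
  moreover have "\<forall>k \<in> bomb_K v x t. k < x"
  proof
    fix k assume "k \<in> bomb_K v x t"
    then have k: "k \<in> {0..x}" "h k = bomb_H v x t" unfolding bomb_K_def h_def by auto
    then show "k < x" using hx by (cases "k = x") auto
  qed
  ultimately show ?thesis by auto
qed

lemma f_eq: "0 < t \<Longrightarrow> bomb_f (1 - v) t = ln (1 + 1 / Rl t)"
  by (auto simp: bomb_f_def Rl_def mult.commute)

lemma g_le:
  assumes t: "0 < t" and u: "v < 1"
  shows "bomb_g (1 - v) t \<le> ln (1 + 1 / Rl t)"
proof -
  define u where "u = 1 - v"
  define w where "w = u * t"
  have u0: "0 < u" using u by (simp add: u_def)
  have w0: "0 < w" using u0 t by (simp add: w_def)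
  have A: "(1 - w) * exp w \<le> 1"
  proof -
    have "(1 - w) * exp w \<le> exp (- w) * exp w"
      using exp_ge_add_one_self[of "- w"] by (intro mult_right_mono) auto
    then show ?thesis by (simp flip: exp_add)
  qed
  have ew: "0 < exp w - 1" using w0 by simp
  have Rl: "Rl t = (exp w - 1) / u" using u by (simp add: Rl_def u_def w_def)
  have "(1 / t - u) * (exp w - 1) = ((1 - w) * (exp w - 1)) / t"
    using t by (simp add: w_def field_simps)
  also have "\<dots> \<le> w / t" using A t by (intro divide_right_mono) (auto simp: algebra_simps)
  also have "\<dots> = u" using t by (simp add: w_def)
  finally have "1 / t - u \<le> u / (exp w - 1)" using ew by (simp add: field_simps)
  then have le: "1 + 1 / t - u \<le> 1 + 1 / Rl t" using Rl by simp
  have pos: "0 < 1 + 1 / t - u" using t u0 v0 by (simp add: u_def add_pos_nonneg)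
  show ?thesis unfolding bomb_g_def u_def[symmetric] using le pos by simp
qed

end

theorem theorem1:
  fixes v t :: real
  assumes "0 < v" and "v \<le> 1" and "0 < t"
  defines "u \<equiv> 1 - v"
  shows "((u = 0 \<or> (0 < u \<and> u < 1/2 \<and> t \<ge> ln (2 * v) / u) \<or> (1/2 \<le> u \<and> u < 1)) \<longrightarrow>
           (\<forall>x > 0. (x \<le> bomb_f u t \<longrightarrow> bomb_K v x t = {x}) \<and>
                    (x > bomb_f u t \<longrightarrow> bomb_K v x t \<noteq> {} \<and> (\<forall>k \<in> bomb_K v x t. k < x)))) \<and>
         ((0 < u \<and> u < 1/2 \<and> t < ln (2 * v) / u) \<longrightarrow>
           (\<forall>x > 0. (x \<le> bomb_g u t \<longrightarrow> bomb_K v x t = {x}) \<and>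
                    (x > bomb_f u t \<longrightarrow> bomb_K v x t \<noteq> {} \<and> (\<forall>k \<in> bomb_K v x t. k < x))))"
proof -
  interpret bomber v using assms by unfold_locales auto
  have t: "0 < t" by fact
  have R: "0 < Rl t" using Rl_pos t by simp
  have f: "bomb_f u t = ln (1 + 1 / Rl t)" unfolding u_def using f_eq t by simp
  have iff: "x \<le> bomb_f u t \<longleftrightarrow> exp x * Rl t \<le> 1 + Rl t" for x
  proof -
    have "x \<le> bomb_f u t \<longleftrightarrow> exp x \<le> 1 + 1 / Rl t"
      unfolding f using R by (intro ln_ge_iff) (simp add: add_pos_pos)
    also have "\<dots> \<longleftrightarrow> exp x * Rl t \<le> 1 + Rl t" using R by (simp add: field_simps)
    finally show ?thesis .
  qed
  have A: "bomb_K v x t = {x}" if "0 < x" "x \<le> bomb_f u t" for x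
    using K_small[OF t that(1)] iff that(2) by blast
  have B: "bomb_K v x t \<noteq> {} \<and> (\<forall>k \<in> bomb_K v x t. k < x)" if "0 < x" "x > bomb_f u t" for x
    using K_big[OF t that(1)] iff[of x] that(2) by (simp add: not_le[symmetric])
  have g: "bomb_g u t \<le> bomb_f u t" if "0 < u" using g_le[OF t] that f unfolding u_def by simp
  show ?thesis using A B g by (meson order_trans)
qed


end
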